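(* Let $c\ge\lceil n/2\rceil$ and let $\mathbf{s}_n\in\mathcal{B}(n,c,d_1)$ with $d_1=n-c$ and $add(\mathbf{s}_n)=t_1$. Suppose that for some integer $0<b<n$ the shifted sequence $R^b(\mathbf{s}_n)$ belongs to $\mathcal{B}(n,c,d_2)$ and $add(R^b(\mathbf{s}_n))=t_2\ge t_1$. If $d_1+d_2\le c+t_2+t_1+1$, then $b=d_2$.
   Context: All sequences are binary (entries in $\mathbb{Z}_2$), $\overline{x}=x\oplus1$, $x\bmod d$ is the least nonnegative residue, and $\mathbf{a}^q$ is the concatenation of $q$ copies of $\mathbf a$. For $\mathbf{s}_n=(s_0,\dots,s_{n-1})$, $\mathbf{s}_j=(s_0,\dots,s_{j-1})$. A length-$m$ sequence is periodic if it is the concatenation of $m/e$ copies of a length-$e$ sequence for a proper divisor $e$ of $m$, aperiodic otherwise. Right circular shift: $R^k(\mathbf{s}_n)=(s_{n-k},\dots,s_{n-1},s_0,\dots,s_{n-k-1})$. For $c\ge\lfloor n/2\rfloor$ and $1\le d\le\min\{n-c,\lfloor n/2\rfloor\}$, $\mathcal{B}(n,c,d)$ is the set of aperiodic length-$n$ sequences $\mathbf{s}_n$ with $\mathbf{s}_d$ aperiodic and $\mathbf{s}_{c+d}=(s_0,\dots,s_{d-1})^q(s_0,\dots,s_{r-1},\overline{s_r})$, where $q=\lfloor(c+d-1)/d\rfloor$, $r=c+d-1-qd$, and $s_{c+d},\dots,s_{n-1}$ are arbitrary. For $\mathbf{s}_n\in\mathcal{B}(n,c,d)$, $add(\mathbf{s}_n)$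 is the integer $t\ge0$ such that $s_{n-1-i}=s_{(d-1-i)\bmod d}$ for $0\le i<t$ and $s_{n-1-t}\neq s_{(d-1-t)\bmod d}$. *)

theory Defs
  imports Main
begin

text \<open>Binary sequences are lists of booleans (Z_2 with True = 1); complement is negation.
  Index i of a list xs is xs ! i.\<close>

definition periodic :: "bool list \<Rightarrow> bool" where
  "periodic xs \<longleftrightarrow> (\<exists>e. 0 < e \<and> e < length xs \<and> e dvd length xs \<and>
      xs = concat (replicate (length xs div e) (take e xs)))"

definition aperiodic :: "bool list \<Rightarrow> bool" where
  "aperiodic xs \<longleftrightarrow> \<not> periodic xs"

text \<open>The set B(n,c,d); the side conditions on c and d from the paper are part of membership.\<close>
definition Bset :: "nat \<Rightarrow> nat \<Rightarrow> nat \<Rightarrow> bool list set" where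
  "Bset n c d = {s. n div 2 \<le> c \<and> 1 \<le> d \<and> d \<le> min (n - c) (n div 2) \<and>
      length s = n \<and> aperiodic s \<and> aperiodic (take d s) \<and>
      (let q = (c + d - 1) div d; r = c + d - 1 - q * d in
        take (c + d) s = concat (replicate q (take d s)) @ take r s @ [\<not> s ! r])}"

text \<open>is_add d s t: t is the value add(s), the first position (counted from the end) at which
  s_{n-1-i} differs from s_{(d-1-i) mod d}, with mod the least nonnegative residue.\<close>
definition is_add :: "nat \<Rightarrow> bool list \<Rightarrow> nat \<Rightarrow> bool" where
  "is_add d s t \<longleftrightarrow> t < length s \<and>
     (\<forall>i<t. s ! (length s - 1 - i) = s ! nat ((int d - 1 - int i) mod int d)) \<and>
     s ! (length s - 1 - t) \<noteq> s ! nat ((int d - 1 - int t) mod int d)"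

definition rshift :: "nat \<Rightarrow> bool list \<Rightarrow> bool list" where
  "rshift k s = drop (length s - k) s @ take (length s - k) s"

end

theory Submission
  imports Defs
begin


lemma per_shift:
  fixes h :: "int \<Rightarrow> 'a"
  assumes "\<forall>i. h i = h (i mod m)"
  shows "h (i + k * m) = h i"
  by (metis assms mod_mult_self1)

lemma sum_window:
  fixes g :: "int \<Rightarrow> nat"
  assumes m: "m > 0" and per: "\<forall>i. g i = g (i mod m)"
  shows "(\<Sum>i\<in>{a..<a+m}. g i) = (\<Sum>i\<in>{0..<m}. g i)"
proof (rule sum.reindex_bij_witness[where i = "\<lambda>j. a + (j - a) mod m" and j = "\<lambda>i. i mod m"])
  fix i assume "i \<in> {a..<a+m}"
  then have "0 \<le> i - a" "i - a < m" by auto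
  then have "(i - a) mod m = i - a" by simp
  moreover have "(i mod m - a) mod m = (i - a) mod m" by (simp add: mod_diff_left_eq)
  ultimately show "a + (i mod m - a) mod m = i" by simp
next
  fix i assume "i \<in> {a..<a+m}" then show "i mod m \<in> {0..<m}" using m by simp
next
  fix j assume "j \<in> {0..<m}"
  then show "(a + (j - a) mod m) mod m = j"
    by (simp add: mod_add_right_eq)
next
  fix j assume "j \<in> {0..<m}"
  then show "a + (j - a) mod m \<in> {a..<a+m}" using m by simp
next
  fix i assume "i \<in> {a..<a+m}" then show "g (i mod m) = g i" using per by simp
qed

lemma parity_window:
  fixes X :: "int \<Rightarrow> bool"
  assumes m: "m > 0" and per: "\<forall>i. X i = X (i mod m)"
  shows "even (card {i \<in> {a..<a+m}. X i \<noteq> X (i + r)})"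
proof -
  let ?W = "{a..<a+m}"
  have per1: "\<forall>i. (of_bool (X i)::nat) = of_bool (X (i mod m))" 
  proof
    fix i from per have "X i = X (i mod m)" ..
    then show "(of_bool (X i)::nat) = of_bool (X (i mod m))" by simp
  qed
  have e1: "(\<Sum>i\<in>?W. (of_bool (X i)::nat)) = (\<Sum>i\<in>{0..<m}. of_bool (X i))"
    by (rule sum_window[OF m per1])
  have per2: "\<forall>i. (of_bool (X (i + r))::nat) = of_bool (X ((i mod m) + r))"
  proof
    fix i
    have "X (i + r) = X ((i + r) mod m)" using per by blast
    moreover have "(i + r) mod m = (i mod m + r) mod m" by (simp add: mod_add_left_eq)
    moreover have "X (i mod m + r) = X ((i mod m + r) mod m)" using per by blast
    ultimately show "(of_bool (X (i + r))::nat) = of_bool (X ((i mod m) + r))" by simp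
  qed
  have e2: "(\<Sum>i\<in>?W. (of_bool (X (i + r))::nat)) = (\<Sum>i\<in>{0..<m}. of_bool (X (i + r)))"
    by (rule sum_window[OF m per2])
  have e3: "(\<Sum>i\<in>{0..<m}. (of_bool (X (i + r))::nat)) = (\<Sum>i\<in>{r..<r+m}. of_bool (X i))"
  proof -
    have "(\<Sum>i\<in>{r..<r+m}. (of_bool (X i)::nat)) = (\<Sum>i\<in>(\<lambda>i. i + r) ` {0..<m}. of_bool (X i))"
      by (rule sum.cong) (auto simp: image_iff intro!: bexI[where x="_ - r"])
    also have "\<dots> = (\<Sum>i\<in>{0..<m}. of_bool (X (i + r)))"
      by (subst sum.reindex) (auto simp: inj_on_def)
    finally show ?thesis by simp
  qed
  have e4: "(\<Sum>i\<in>{r..<r+m}. (of_bool (X i)::nat)) = (\<Sum>i\<in>{0..<m}. of_bool (X i))"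
    by (rule sum_window[OF m per1])
  have key: "\<And>i. (of_bool (X i \<noteq> X (i + r))::nat) + 2 * of_bool (X i \<and> X (i + r))
              = of_bool (X i) + of_bool (X (i + r))" by auto
  have "(\<Sum>i\<in>?W. (of_bool (X i \<noteq> X (i + r))::nat)) + 2 * (\<Sum>i\<in>?W. of_bool (X i \<and> X (i + r)))
        = (\<Sum>i\<in>?W. of_bool (X i)) + (\<Sum>i\<in>?W. of_bool (X (i + r)))"
    unfolding sum_distrib_left sum.distrib[symmetric] key by (rule refl)
  also have "\<dots> = 2 * (\<Sum>i\<in>{0..<m}. of_bool (X i))" using e1 e2 e3 e4 by simp
  finally have "even (\<Sum>i\<in>?W. (of_bool (X i \<noteq> X (i + r))::nat))"
    by presburger
  moreover have "(\<Sum>i\<in>?W. (of_bool (X i \<noteq> X (i + r))::nat)) = card {i \<in> ?W. X i \<noteq> X (i + r)}"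
    by (subst sum_of_bool_eq) (auto intro: arg_cong[where f=card])
  ultimately show ?thesis by simp
qed


lemma fill:
  fixes D :: "int \<Rightarrow> bool"
  assumes ev: "even (card {i \<in> {a..<a+m}. D i})"
    and z: "\<forall>i. a \<le> i \<and> i < a + m \<and> i \<noteq> j \<longrightarrow> \<not> D i"
    and j: "a \<le> j" "j < a + m"
  shows "\<not> D j"
proof
  assume "D j"
  then have "{i \<in> {a..<a+m}. D i} = {j}" using z j by auto
  then show False using ev by simp
qed

lemma zero_all:
  fixes h :: "int \<Rightarrow> bool"
  assumes m: "m > 0" and per: "\<forall>i. h i = h (i mod m)"
    and z: "\<forall>i. a \<le> i \<and> i < a + m \<longrightarrow> \<not> h i"
  shows "\<not> h j"
proof -
  let ?j = "a + (j - a) mod m"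
  have "a \<le> ?j" "?j < a + m" using m by auto
  then have "\<not> h ?j" using z by blast
  moreover have "?j mod m = j mod m" by (simp add: mod_add_right_eq)
  ultimately show ?thesis using per by metis
qed

lemma three_odd:
  fixes h :: "int \<Rightarrow> bool"
  assumes ev: "even (card {i \<in> {a..<a+m}. h i})"
    and S: "\<forall>i. a \<le> i \<and> i < a + m \<longrightarrow> (h i \<longleftrightarrow> i = p \<or> i = q \<or> i = r)"
    and pqr: "a \<le> p" "p < q" "q < r" "r < a + m"
  shows False
proof -
  have "{i \<in> {a..<a+m}. h i} = {p, q, r}" using S pqr by auto
  then have "card {i \<in> {a..<a+m}. h i} = 3" using pqr by simp
  then show False using ev by simp
qed

lemma two_runs:
  fixes h :: "int \<Rightarrow> bool"
  assumes m: "m > 0" and per: "\<forall>i. h i = h (i mod m)"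
    and par: "\<forall>a. even (card {i \<in> {a..<a+m}. h i})"
    and z1: "\<forall>i. a1 \<le> i \<and> i \<le> e1 \<longrightarrow> \<not> h i" and o1: "h (a1 - 1)" "h (e1 + 1)" and l1: "a1 \<le> e1 + 1"
    and z2: "\<forall>i. a2 \<le> i \<and> i \<le> e2 \<longrightarrow> \<not> h i" and o2: "h (a2 - 1)" "h (e2 + 1)" and l2: "a2 \<le> e2 + 1"
  shows "(\<exists>k. a2 = a1 + k * m \<and> e2 - a2 = e1 - a1) \<or> (e1 - a1) + (e2 - a2) + 2 \<le> m - 4 \<or>
         ((e1 - a1) + (e2 - a2) + 2 = m - 2 \<and> m dvd (a2 - e1 - 2) \<and> m dvd (e2 + 2 - a1))"
proof -
  define k where "k = (a2 - a1) div m"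
  define b2 where "b2 = a2 - k * m"
  define f2 where "f2 = e2 - k * m"
  have b2eq: "b2 = a1 + (a2 - a1) mod m"
    using minus_div_mult_eq_mod[of "a2 - a1" m] unfolding b2_def k_def by linarith
  have b2r: "a1 \<le> b2" "b2 < a1 + m" using m b2eq by auto
  have sh: "\<And>i. h (i + k * m) = h i" using per_shift[OF per] by blast
  have zz2: "\<forall>i. b2 \<le> i \<and> i \<le> f2 \<longrightarrow> \<not> h i"
  proof (intro allI impI)
    fix i assume "b2 \<le> i \<and> i \<le> f2"
    then have "a2 \<le> i + k * m \<and> i + k * m \<le> e2" unfolding b2_def f2_def by auto
    then have "\<not> h (i + k * m)" using z2 by blast
    then show "\<not> h i" using sh by simp
  qed
  have oo2: "h (b2 - 1)" "h (f2 + 1)"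
    using sh[of "b2 - 1"] sh[of "f2 + 1"] o2 unfolding b2_def f2_def by (simp_all add: algebra_simps)
  have ll2: "b2 \<le> f2 + 1" using l2 unfolding b2_def f2_def by simp
  have len2: "f2 - b2 = e2 - a2" unfolding b2_def f2_def by simp
  have wrap: "h (a1 - 1 + m)" using per_shift[OF per, of "a1 - 1" 1] o1 by simp
  show ?thesis
  proof (cases "b2 = a1")
    case True
    have "f2 = e1"
    proof (rule ccontr)
      assume ne: "f2 \<noteq> e1"
      show False
      proof (cases "f2 < e1")
        case True
        then have "\<not> h (f2 + 1)" using z1 ll2 \<open>b2 = a1\<close> by auto
        then show False using oo2 by simp
      next
        case False
        then have "e1 < f2" using ne by simp
        then have "\<not> h (e1 + 1)" using zz2 l1 \<open>b2 = a1\<close> by auto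
        then show False using o1 by simp
      qed
    qed
    then have "a2 = a1 + k * m \<and> e2 - a2 = e1 - a1" using True len2 unfolding b2_def by simp
    then show ?thesis by blast
  next
    case False
    then have gt: "a1 < b2" using b2r by simp
    have g1: "e1 + 1 \<le> b2 - 1"
    proof (rule ccontr)
      assume "\<not> e1 + 1 \<le> b2 - 1"
      then have "\<not> h (b2 - 1)" using z1 gt by auto
      then show False using oo2 by simp
    qed
    have g2: "f2 + 1 \<le> a1 + m - 1"
    proof (rule ccontr)
      assume "\<not> f2 + 1 \<le> a1 + m - 1"
      then have "\<not> h (a1 - 1 + m)" using zz2 b2r by auto
      then show False using wrap by simp
    qed
    have ev: "even (card {i \<in> {a1 - 1..<a1 - 1 + m}. h i})" using par by blast
    have hv: "\<And>i. a1 - 1 \<le> i \<Longrightarrow> i < a1 - 1 + m \<Longrightarrow>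
       (i = a1 - 1 \<longrightarrow> h i) \<and> (a1 \<le> i \<and> i \<le> e1 \<longrightarrow> \<not> h i) \<and> (i = e1 + 1 \<longrightarrow> h i) \<and>
       (i = b2 - 1 \<longrightarrow> h i) \<and> (b2 \<le> i \<and> i \<le> f2 \<longrightarrow> \<not> h i) \<and> (i = f2 + 1 \<longrightarrow> h i)"
      using o1 z1 oo2 zz2 by blast
    show ?thesis
    proof (cases "(e1 - a1) + (e2 - a2) + 2 \<le> m - 4")
      case True then show ?thesis by blast
    next
      case nle: False
      have cases3: "(b2 = e1 + 2 \<and> f2 = a1 + m - 2) \<or> (b2 = e1 + 3 \<and> f2 = a1 + m - 2) \<or>
                    (b2 = e1 + 2 \<and> f2 = a1 + m - 3)"
        using nle g1 g2 len2 by linarith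
      then show ?thesis
      proof (elim disjE)
        assume c: "b2 = e1 + 2 \<and> f2 = a1 + m - 2"
        have "(e1 - a1) + (e2 - a2) + 2 = m - 2" using c len2 by linarith
        moreover have "a2 - e1 - 2 = k * m" using c unfolding b2_def by linarith
        moreover have "e2 + 2 - a1 = (k + 1) * m" using c unfolding f2_def by (simp add: algebra_simps)
        ultimately show ?thesis by (metis dvd_triv_right)
      next
        assume c: "b2 = e1 + 3 \<and> f2 = a1 + m - 2"
        have S: "\<forall>i. a1 - 1 \<le> i \<and> i < a1 - 1 + m \<longrightarrow> (h i \<longleftrightarrow> i = a1 - 1 \<or> i = e1 + 1 \<or> i = e1 + 2)"
        proof (intro allI impI)
          fix i assume i: "a1 - 1 \<le> i \<and> i < a1 - 1 + m"
          show "h i \<longleftrightarrow> i = a1 - 1 \<or> i = e1 + 1 \<or> i = e1 + 2"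
          proof (cases "i = a1 - 1 \<or> i = e1 + 1 \<or> i = e1 + 2")
            case True
            have "h (e1 + 2)" using oo2(1) c by (simp add: add.commute)
            then show ?thesis using True o1 by auto
          next
            case False
            then have "(a1 \<le> i \<and> i \<le> e1) \<or> (b2 \<le> i \<and> i \<le> f2)" using i c by linarith
            then have "\<not> h i" using z1 zz2 by blast
            then show ?thesis using False by simp
          qed
        qed
        have False
          by (rule three_odd[OF ev S]) (use l1 c ll2 in linarith)+
        then show ?thesis ..
      next
        assume c: "b2 = e1 + 2 \<and> f2 = a1 + m - 3"
        have S: "\<forall>i. a1 - 1 \<le> i \<and> i < a1 - 1 + m \<longrightarrow> (h i \<longleftrightarrow> i = a1 - 1 \<or> i = e1 + 1 \<or> i = a1 + m - 2)"
        proof (intro allI impI)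
          fix i assume i: "a1 - 1 \<le> i \<and> i < a1 - 1 + m"
          show "h i \<longleftrightarrow> i = a1 - 1 \<or> i = e1 + 1 \<or> i = a1 + m - 2"
          proof (cases "i = a1 - 1 \<or> i = e1 + 1 \<or> i = a1 + m - 2")
            case True
            have "h (a1 + m - 2)" using oo2(2) c by (simp add: algebra_simps)
            then show ?thesis using True o1 by auto
          next
            case False
            then have "(a1 \<le> i \<and> i \<le> e1) \<or> (b2 \<le> i \<and> i \<le> f2)" using i c by linarith
            then have "\<not> h i" using z1 zz2 by blast
            then show ?thesis using False by simp
          qed
        qed
        have False
          by (rule three_odd[OF ev S]) (use l1 c ll2 in linarith)+
        then show ?thesis ..
      qed
    qed
  qed
qed



lemma dvd_small_zero:
  fixes d v :: int
  assumes "d dvd v" "0 \<le> v" "v < d"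
  shows "v = 0"
  using assms zdvd_imp_le by fastforce

lemma mult_window_one:
  fixes d K k :: int
  assumes "K = k * d" "0 < d" "0 < K" "K < 2 * d"
  shows "K = d"
proof -
  have "k \<ge> 1"
  proof (rule ccontr)
    assume "\<not> k \<ge> 1" then have "k \<le> 0" by simp
    then have "k * d \<le> 0" using assms(2) by (simp add: mult_nonpos_nonneg)
    then show False using assms by simp
  qed
  moreover have "k \<le> 1"
  proof (rule ccontr)
    assume "\<not> k \<le> 1" then have "k \<ge> 2" by simp
    then have "2 * d \<le> k * d" using assms(2) by (intro mult_right_mono) auto
    then show False using assms by linarith
  qed
  ultimately show ?thesis using assms by simp
qed


lemma per_of_shift:
  fixes X :: "int \<Rightarrow> bool"
  assumes per: "\<forall>i. X i = X (i mod m)"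
  shows "\<forall>i. (X i \<noteq> X (i + r)) = (X (i mod m) \<noteq> X (i mod m + r))"
proof
  fix i
  have "X (i + r) = X ((i + r) mod m)" using per by blast
  moreover have "(i + r) mod m = (i mod m + r) mod m" by (simp add: mod_add_left_eq)
  moreover have "X (i mod m + r) = X ((i mod m + r) mod m)" using per by blast
  moreover have "X i = X (i mod m)" using per by blast
  ultimately show "(X i \<noteq> X (i + r)) = (X (i mod m) \<noteq> X (i mod m + r))" by simp
qed

lemma core:
  fixes f P Q :: "int \<Rightarrow> bool" and n c d1 d2 t1 t2 b :: int
  assumes nd: "n = c + d1" and d2pos: "1 \<le> d2" and d21: "d2 \<le> d1" and d1c: "d1 \<le> c"
    and bpos: "0 < b" and bn: "b < n" and t1pos: "0 \<le> t1" and t12: "t1 \<le> t2"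
    and hyp: "d1 + d2 \<le> c + t1 + t2 + 1"
    and fper: "\<forall>i. f i = f (i mod n)" and Pper: "\<forall>i. P i = P (i mod d1)"
    and Qper: "\<forall>i. Q i = Q (i mod d2)"
    and Pprim: "(\<forall>i. P i = P (i + d2)) \<Longrightarrow> d1 dvd d2"
    and F1: "\<forall>i. -t1 \<le> i \<and> i \<le> n - 2 \<longrightarrow> f i = P i"
    and F2: "f (n - 1) \<noteq> P (n - 1)"
    and F3: "f (-t1 - 1) \<noteq> P (-t1 - 1)"
    and G1: "\<forall>i. -b - t2 \<le> i \<and> i \<le> c + d2 - 2 - b \<longrightarrow> f i = Q i"
    and G2: "f (c + d2 - 1 - b) \<noteq> Q (c + d2 - 1 - b)"
    and G3: "f (-b - t2 - 1) \<noteq> Q (-b - t2 - 1)"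
  shows "b = d2"
proof -
  define x where "x = -b - t2"
  define y where "y = c + d2 - 2 - b"
  define \<beta> where "\<beta> i = (f i \<noteq> f (i + d2))" for i
  define \<pi> where "\<pi> i = (P i \<noteq> P (i + d2))" for i
  have npos: "n > 0" and d1pos: "d1 > 0" using nd d2pos d21 d1c by auto
  have fsh: "\<And>i k. f (i + k * n) = f i" using per_shift[OF fper] by blast
  have Psh: "\<And>i k. P (i + k * d1) = P i" using per_shift[OF Pper] by blast
  have Qsh: "\<And>i k. Q (i + k * d2) = Q i" using per_shift[OF Qper] by blast
  have \<beta>per: "\<forall>i. \<beta> i = \<beta> (i mod n)" using per_of_shift[OF fper, of d2] unfolding \<beta>_def by blast
  have \<pi>per: "\<forall>i. \<pi> i = \<pi> (i mod d1)" using per_of_shift[OF Pper, of d2] unfolding \<pi>_def by blast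
  have \<beta>sh: "\<And>i k. \<beta> (i + k * n) = \<beta> i" using per_shift[OF \<beta>per] by blast
  have \<pi>sh: "\<And>i k. \<pi> (i + k * d1) = \<pi> i" using per_shift[OF \<pi>per] by blast
  have \<beta>par: "\<forall>a. even (card {i \<in> {a..<a+n}. \<beta> i})"
    using parity_window[OF npos fper] unfolding \<beta>_def by blast
  have \<pi>par: "\<forall>a. even (card {i \<in> {a..<a+d1}. \<pi> i})"
    using parity_window[OF d1pos Pper] unfolding \<pi>_def by blast
  have Qd2: "\<And>i. Q (i + d2) = Q i" using Qsh[of _ 1] by simp
  have G1': "\<And>i. x \<le> i \<Longrightarrow> i \<le> y \<Longrightarrow> f i = Q i" using G1 unfolding x_def y_def by blast
  have F1': "\<And>i. -t1 \<le> i \<Longrightarrow> i \<le> n - 2 \<Longrightarrow> f i = P i" using F1 by blast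
  have bG: "\<forall>i. x \<le> i \<and> i \<le> y - d2 \<longrightarrow> \<not> \<beta> i"
  proof (intro allI impI)
    fix i assume i: "x \<le> i \<and> i \<le> y - d2"
    have "f i = Q i" using i d2pos by (intro G1') linarith+
    moreover have "f (i + d2) = Q (i + d2)" using i d2pos by (intro G1') linarith+
    ultimately show "\<not> \<beta> i" unfolding \<beta>_def using Qd2 by simp
  qed
  have bR: "\<beta> (y - d2 + 1)"
  proof -
    have "f (y - d2 + 1) = Q (y - d2 + 1)" unfolding y_def using t12 t1pos d2pos d1c d1pos by (intro G1[rule_format] conjI) linarith+
    moreover have "Q (y - d2 + 1 + d2) = Q (y - d2 + 1)" by (rule Qd2)
    moreover have "f (y + 1) \<noteq> Q (y + 1)" using G2 unfolding y_def by (simp add: algebra_simps)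
    ultimately show ?thesis unfolding \<beta>_def by simp
  qed
  have bL: "\<beta> (x - 1)"
  proof -
    have "f (x - 1 + d2) = Q (x - 1 + d2)" unfolding x_def using t12 t1pos d2pos d1c d21 d1pos by (intro G1[rule_format] conjI) linarith+
    moreover have "Q (x - 1 + d2) = Q (x - 1)" by (rule Qd2)
    moreover have "f (x - 1) \<noteq> Q (x - 1)" using G3 unfolding x_def by (simp add: algebra_simps)
    ultimately show ?thesis unfolding \<beta>_def by simp
  qed
  have bJ: "\<forall>i. -t1 \<le> i \<and> i \<le> n - 2 - d2 \<longrightarrow> \<beta> i = \<pi> i"
  proof (intro allI impI)
    fix i assume i: "-t1 \<le> i \<and> i \<le> n - 2 - d2"
    have "f i = P i" using i d2pos by (intro F1') linarith+
    moreover have "f (i + d2) = P (i + d2)" using i d2pos by (intro F1') linarith+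
    ultimately show "\<beta> i = \<pi> i" unfolding \<beta>_def \<pi>_def by simp
  qed
  have b3: "\<beta> (n - 1 - d2) \<noteq> \<pi> (n - 1 - d2)"
  proof -
    have "f (n - 1 - d2) = P (n - 1 - d2)" using nd d2pos d21 d1c t1pos by (intro F1') linarith+
    then show ?thesis using F2 unfolding \<beta>_def \<pi>_def by auto
  qed
  have b4: "\<beta> (-t1 - 1) \<noteq> \<pi> (-t1 - 1)"
  proof -
    have "f (-t1 - 1 + d2) = P (-t1 - 1 + d2)" using nd d2pos d21 d1c t1pos by (intro F1') linarith+
    then show ?thesis using F3 unfolding \<beta>_def \<pi>_def by auto
  qed
  show ?thesis
  proof (cases "d2 = d1")
    case True
    have pz: "\<And>i. \<not> \<pi> i" unfolding \<pi>_def using Psh[of _ 1] True by simp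
    have z1: "\<forall>i. -t1 \<le> i \<and> i \<le> n - 2 - d2 \<longrightarrow> \<not> \<beta> i" using bJ pz by blast
    have o1: "\<beta> (-t1 - 1)" "\<beta> (n - 2 - d2 + 1)" using b4 b3 pz by (auto simp: algebra_simps)
    have o2: "\<beta> (x - 1)" "\<beta> (y - d2 + 1)" using bL bR by auto
    have l1: "-t1 \<le> n - 2 - d2 + 1" using nd True t1pos d1c d1pos by linarith
    have l2: "x \<le> y - d2 + 1" unfolding x_def y_def using t12 t1pos d1c d2pos d21 by linarith
    from two_runs[OF npos \<beta>per \<beta>par z1 o1 l1 bG o2 l2]
    show ?thesis
    proof (elim disjE)
      assume "\<exists>k. x = -t1 + k * n \<and> y - d2 - x = n - 2 - d2 - -t1"
      then obtain k where k: "x = -t1 + k * n" "y - d2 - x = n - 2 - d2 - -t1" by blast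
      have "t2 = t1" using k(2) True nd unfolding x_def y_def by linarith
      then have "b = (-k) * n" using k(1) unfolding x_def by (simp add: algebra_simps)
      then have "n dvd b" by simp
      then show ?thesis using bpos bn zdvd_imp_le by fastforce
    next
      assume "n - 2 - d2 - - t1 + (y - d2 - x) + 2 \<le> n - 4"
      then show ?thesis unfolding x_def y_def using nd True t1pos t12 d1c by linarith
    next
      assume a: "n - 2 - d2 - - t1 + (y - d2 - x) + 2 = n - 2 \<and> n dvd x - (n - 2 - d2) - 2 \<and> n dvd y - d2 + 2 - - t1"
      then show ?thesis unfolding x_def y_def using nd True t1pos t12 d1c hyp bpos bn by linarith
    qed
  next
    case False
    then have d21s: "d2 < d1" using d21 by simp
    have Z: "\<And>a e. (\<forall>i. a \<le> i \<and> i \<le> e \<longrightarrow> \<not> \<pi> i) \<Longrightarrow> d1 \<le> e - a + 2 \<Longrightarrow> False"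
    proof -
      fix a e assume za: "\<forall>i. a \<le> i \<and> i \<le> e \<longrightarrow> \<not> \<pi> i" and le: "d1 \<le> e - a + 2"
      have "\<not> \<pi> (a + d1 - 1)"
        by (rule fill[OF \<pi>par[rule_format, of a]]) (use za le d1pos in auto)
      then have "\<forall>i. a \<le> i \<and> i < a + d1 \<longrightarrow> \<not> \<pi> i"
      proof (intro allI impI)
        fix i assume h: "\<not> \<pi> (a + d1 - 1)" and i: "a \<le> i \<and> i < a + d1"
        show "\<not> \<pi> i"
        proof (cases "i = a + d1 - 1")
          case True then show ?thesis using h by simp
        next
          case False then have "i \<le> e" using i le by linarith
          then show ?thesis using za i by blast
        qed
      qed
      then have "\<And>j. \<not> \<pi> j" using zero_all[OF d1pos \<pi>per] by blast
      then have "\<forall>i. P i = P (i + d2)" unfolding \<pi>_def by blast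
      then have "d1 dvd d2" by (rule Pprim)
      then show False using d21s d2pos zdvd_imp_le by fastforce
    qed
    have t2b: "t2 \<le> d1 - 1"
    proof (rule ccontr)
      assume "\<not> t2 \<le> d1 - 1"
      then have big: "x + n - 2 \<le> y - d2" unfolding x_def y_def using nd by linarith
      have "\<not> \<beta> (x + n - 1)"
        by (rule fill[OF \<beta>par[rule_format, of x]]) (use bG big npos in auto)
      moreover have "\<beta> (x - 1 + 1 * n) = \<beta> (x - 1)" by (rule \<beta>sh)
      ultimately show False using bL by (simp add: algebra_simps)
    qed
    have yge: "y \<ge> -1"
    proof (rule ccontr)
      assume "\<not> y \<ge> -1"
      then have y2: "y \<le> -2" by simp
      show False
      proof (cases "x + n \<ge> -t1")
        case True
        have "\<forall>i. x + n \<le> i \<and> i \<le> y - d2 + n \<longrightarrow> \<not> \<pi> i"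
        proof (intro allI impI)
          fix i assume i: "x + n \<le> i \<and> i \<le> y - d2 + n"
          have "\<beta> i = \<pi> i" using bJ i True y2 by auto
          moreover have "\<beta> (i + (-1) * n) = \<beta> i" by (rule \<beta>sh)
          moreover have "\<not> \<beta> (i - n)" using bG i by auto
          ultimately show "\<not> \<pi> i" by simp
        qed
        then show False by (rule Z) (unfold x_def y_def, use d1c t1pos t12 in linarith)
      next
        case False
        have "\<forall>i. -t1 \<le> i \<and> i \<le> y - d2 + n \<longrightarrow> \<not> \<pi> i"
        proof (intro allI impI)
          fix i assume i: "-t1 \<le> i \<and> i \<le> y - d2 + n"
          have "\<beta> i = \<pi> i" using bJ i y2 by auto
          moreover have "\<beta> (i + (-1) * n) = \<beta> i" by (rule \<beta>sh)
          moreover have "\<not> \<beta> (i - n)" using bG i False by auto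
          ultimately show "\<not> \<pi> i" by simp
        qed
        then show False by (rule Z) (unfold x_def y_def, use d1c t1pos t12 bn nd in linarith)
      qed
    qed
    have xn: "x + n \<ge> -t1"
    proof (rule ccontr)
      assume a: "\<not> x + n \<ge> -t1"
      have "\<forall>i. -t1 \<le> i \<and> i \<le> n - 2 - d2 \<longrightarrow> \<not> \<pi> i"
      proof (intro allI impI)
        fix i assume i: "-t1 \<le> i \<and> i \<le> n - 2 - d2"
        have "\<beta> i = \<pi> i" using bJ i by auto
        moreover have "\<beta> (i + (-1) * n) = \<beta> i" by (rule \<beta>sh)
        moreover have "\<not> \<beta> (i - n)" using bG i a yge by auto
        ultimately show "\<not> \<pi> i" by simp
      qed
      then show False by (rule Z) (use nd d1c d21 t1pos in linarith)
    qed
    have Rz: "\<forall>i. -t1 \<le> i \<and> i \<le> y - d2 \<longrightarrow> \<not> \<pi> i"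
    proof (intro allI impI)
      fix i assume i: "-t1 \<le> i \<and> i \<le> y - d2"
      have yn: "y \<le> n - 2" unfolding y_def using nd d21 bpos by linarith
      have "\<beta> i = \<pi> i" using bJ i yn by auto
      moreover have "\<not> \<beta> i" using bG i t12 unfolding x_def using bpos by auto
      ultimately show "\<not> \<pi> i" by simp
    qed
    have Lz: "\<forall>i. x + n \<le> i \<and> i \<le> n - 2 - d2 \<longrightarrow> \<not> \<pi> i"
    proof (intro allI impI)
      fix i assume i: "x + n \<le> i \<and> i \<le> n - 2 - d2"
      have "\<beta> i = \<pi> i" using bJ i xn by auto
      moreover have "\<beta> (i + (-1) * n) = \<beta> i" by (rule \<beta>sh)
      moreover have "\<not> \<beta> (i - n)" using bG i yge by auto
      ultimately show "\<not> \<pi> i" by simp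
    qed
    have Rb: "y - d2 + t1 + 1 \<le> d1 - 2"
    proof (rule ccontr)
      assume "\<not> y - d2 + t1 + 1 \<le> d1 - 2"
      then show False by (intro Z[OF Rz]) linarith
    qed
    have Lb: "-1 - d2 - x \<le> d1 - 2"
    proof (rule ccontr)
      assume "\<not> -1 - d2 - x \<le> d1 - 2"
      then show False by (intro Z[OF Lz]) linarith
    qed
    have sumge: "(y - d2 + t1 + 1) + (-1 - d2 - x) \<ge> d1 - 3"
      unfolding x_def y_def using hyp by linarith
    have d2p: "d2 > 0" using d2pos by simp
    note basics = nd d2pos d21 d1c bpos bn t1pos t12 d1pos d21s
    show ?thesis
    proof (cases "y - d2 + t1 + 1 < 0")
      case B: True
      have eqs: "y - d2 + t1 + 1 = -1" "-1 - d2 - x = d1 - 2" using basics B sumge Lb by linarith+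
      have bb: "b = c + t1" and ct: "c + t1 + t2 = d1 + d2 - 1"
        using eqs unfolding x_def y_def by linarith+
      define w0 where "w0 = x + n"
      define j0 where "j0 = w0 + (-t1 - w0) mod d1"
      define \<tau> where "\<tau> = j0 + t1"
      have j0r: "w0 \<le> j0" "j0 \<le> w0 + d1 - 1" unfolding j0_def using basics d1pos
        by (simp_all add: pos_mod_bound pos_mod_sign)
      obtain q where q: "\<tau> = q * d1"
      proof -
        have e: "(-t1 - w0) div d1 * d1 + (-t1 - w0) mod d1 = -t1 - w0" by (rule div_mult_mod_eq)
        have "\<tau> = - ((-t1 - w0) div d1 * d1)" unfolding \<tau>_def j0_def using basics e by linarith
        then have "\<tau> = (- ((-t1 - w0) div d1)) * d1" by simp
        then show ?thesis using that by blast
      qed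
      have P\<tau>: "\<And>i. P (i + \<tau>) = P i" using Psh q by simp
      have w0v: "w0 = d1 - t1 - t2" unfolding w0_def x_def using basics nd bb by linarith
      have yv: "y = d2 - 2 - t1" unfolding y_def using basics bb by linarith
      have xv: "x = w0 - n" unfolding w0_def by simp
      define \<rho> where "\<rho> = \<tau> - n"
      define D where "D i = (Q i \<noteq> Q (i + \<rho>))" for i
      have Dpar: "\<forall>a. even (card {i \<in> {a..<a+d2}. D i})"
        using parity_window[OF d2p Qper] unfolding D_def by blast
      have nD: "\<forall>i. -t1 \<le> i \<and> i < -t1 + d2 \<and> i \<noteq> d2 - 1 - t1 \<longrightarrow> \<not> D i"
      proof (intro allI impI)
        fix i assume i0: "-t1 \<le> i \<and> i < -t1 + d2 \<and> i \<noteq> d2 - 1 - t1"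
        then have i: "-t1 \<le> i" "i \<le> d2 - 2 - t1" by linarith+
        have "Q i = f i" using basics i yv xv w0v t12 bpos nd xn j0r by (intro G1'[symmetric]) linarith+
        also have "\<dots> = P i" using basics i nd d21 d1c by (intro F1') linarith+
        also have "\<dots> = P (i + \<tau>)" by (rule P\<tau>[symmetric])
        also have "\<dots> = f (i + \<tau>)" using basics i j0r xn w0v nd ct \<tau>_def unfolding w0_def
          by (intro F1'[symmetric]) linarith+
        also have "\<dots> = f (i + \<tau> + (-1) * n)" by (rule fsh[symmetric])
        also have "\<dots> = f (i + \<rho>)" unfolding \<rho>_def by (simp add: algebra_simps)
        also have "\<dots> = Q (i + \<rho>)" using basics i j0r xv yge w0v nd ct \<tau>_def \<rho>_def
          by (intro G1') linarith+
        finally show "\<not> D i" unfolding D_def by simp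
      qed
      have nDj: "\<not> D (d2 - 1 - t1)"
        by (rule fill[OF Dpar[rule_format, of "-t1"] nD]) (use d2pos in linarith)+
      show ?thesis
      proof (cases "j0 \<le> w0 + d1 - 2")
        case True
        have "f (y + 1) = P (y + 1)" using basics yv t1pos nd d21 d1c by (intro F1') linarith+
        also have "\<dots> = P (y + 1 + \<tau>)" by (rule P\<tau>[symmetric])
        also have "\<dots> = f (y + 1 + \<tau>)" using basics yv j0r True xn w0v nd ct \<tau>_def unfolding w0_def
          by (intro F1'[symmetric]) linarith+
        also have "\<dots> = f (y + 1 + \<tau> + (-1) * n)" by (rule fsh[symmetric])
        also have "\<dots> = f (y + 1 + \<rho>)" unfolding \<rho>_def by (simp add: algebra_simps)
        also have "\<dots> = Q (y + 1 + \<rho>)" using basics yv j0r True xv yge w0v nd ct d2pos \<tau>_def \<rho>_def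
          by (intro G1') linarith+
        also have "\<dots> = Q (y + 1)"
        proof -
          have e: "y + 1 = d2 - 1 - t1" using yv by simp
          have h: "Q (d2 - 1 - t1) = Q (d2 - 1 - t1 + \<rho>)" using nDj unfolding D_def by simp
          show ?thesis unfolding e using h by simp
        qed
        finally have fy: "f (y + 1) = Q (y + 1)" .
        have e: "c + d2 - 1 - b = y + 1" unfolding y_def by simp
        show ?thesis using G2 fy unfolding e by simp
      next
        case False
        then have "(-t1 - w0) mod d1 = d1 - 1" using basics j0r unfolding j0_def by linarith
        then have "d1 dvd (-t1 - w0) - (d1 - 1)" by (metis dvd_minus_mod)
        then have "d1 dvd (t2 + 1 - 2 * d1)" using basics w0v by (simp add: algebra_simps)
        then have "d1 dvd (t2 + 1 - 2 * d1) + d1 * 2" by (rule dvd_add) simp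
        then have dv: "d1 dvd t2 + 1" by simp
        have "t2 + 1 = d1"
        proof (rule ccontr)
          assume "t2 + 1 \<noteq> d1"
          then have "t2 + 1 < d1" using basics t2b by linarith
          then have "t2 + 1 = 0" using basics dvd_small_zero[OF dv] t12 t1pos by linarith
          then show False using basics t12 t1pos by linarith
        qed
        then show ?thesis using basics ct d1c d21s t1pos by linarith
      qed
    next
      case nB: False
      show ?thesis
      proof (cases "-1 - d2 - x < 0")
        case C: True
        have eqs: "-1 - d2 - x = -1" "y - d2 + t1 + 1 = d1 - 2" using basics C nB sumge Rb by linarith+
        have bb: "b = d2 - t2" and ct: "c + t1 + t2 = d1 + d2 - 1"
          using eqs unfolding x_def y_def by linarith+
        show ?thesis
        proof (cases "t2 = 0")
          case True then show ?thesis using bb by simp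
        next
          case t2nz: False
          have xv: "x = -d2" using basics eqs by linarith
          have yv: "y = d1 + d2 - 3 - t1" using basics eqs by linarith
          define j0 where "j0 = -t1 + (n - d2 + t1) mod d1"
          define \<tau> where "\<tau> = j0 - (n - d2)"
          have j0r: "-t1 \<le> j0" "j0 \<le> -t1 + d1 - 1" unfolding j0_def using basics d1pos
            by (simp_all add: pos_mod_bound pos_mod_sign)
          obtain q where q: "\<tau> = q * d1"
          proof -
            have e: "(n - d2 + t1) div d1 * d1 + (n - d2 + t1) mod d1 = n - d2 + t1" by (rule div_mult_mod_eq)
            have "\<tau> = - ((n - d2 + t1) div d1 * d1)" unfolding \<tau>_def j0_def using basics e by linarith
            then have "\<tau> = (- ((n - d2 + t1) div d1)) * d1" by simp
            then show ?thesis using that by blast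
          qed
          have P\<tau>: "\<And>i. P (i + \<tau>) = P i" using Psh q by simp
          define \<rho> where "\<rho> = n + \<tau>"
          define D where "D i = (Q i \<noteq> Q (i + \<rho>))" for i
          have Dpar: "\<forall>a. even (card {i \<in> {a..<a+d2}. D i})"
            using parity_window[OF d2p Qper] unfolding D_def by blast
          have Dper: "\<forall>i. D i = D (i mod d2)" using basics per_of_shift[OF Qper, of \<rho>] unfolding D_def by blast
          have t1d2: "t1 \<le> d2 - 1" using basics bb bpos t12 by linarith
          have nD: "\<forall>i. -d2 \<le> i \<and> i < -d2 + d2 \<and> i \<noteq> -1 \<longrightarrow> \<not> D i"
          proof (intro allI impI)
            fix i assume i0: "-d2 \<le> i \<and> i < -d2 + d2 \<and> i \<noteq> -1"
            then have i: "-d2 \<le> i" "i \<le> -2" by linarith+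
            have "Q i = f i" using basics i xv yge by (intro G1'[symmetric]) linarith+
            also have "\<dots> = f (i + 1 * n)" by (rule fsh[symmetric])
            also have "\<dots> = f (i + n)" by simp
            also have "\<dots> = P (i + n)" using basics i nd d21 d1c t1pos by (intro F1') linarith+
            also have "\<dots> = P (i + n + \<tau>)" by (rule P\<tau>[symmetric])
            also have "\<dots> = f (i + n + \<tau>)" using basics i j0r nd ct d21 d1c \<tau>_def
              by (intro F1'[symmetric]) linarith+
            also have "\<dots> = f (i + \<rho>)" unfolding \<rho>_def by (simp add: algebra_simps)
            also have "\<dots> = Q (i + \<rho>)" using basics i j0r xv yv t1d2 d2pos \<tau>_def \<rho>_def
              by (intro G1') linarith+
            finally show "\<not> D i" unfolding D_def by simp
          qed
          have "\<not> D (-1)"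
            by (rule fill[OF Dpar[rule_format, of "-d2"] nD]) (use d2pos in linarith)+
          then have "\<forall>i. -d2 \<le> i \<and> i < -d2 + d2 \<longrightarrow> \<not> D i" using basics nD by auto
          then have nD1: "\<not> D (-d2 - 1)" using basics zero_all[OF d2p Dper] by blast
          show ?thesis
          proof (cases "j0 \<ge> -t1 + 1")
            case True
            have "f (-d2 - 1) = f (-d2 - 1 + 1 * n)" by (rule fsh[symmetric])
            also have "\<dots> = f (n - d2 - 1)" by (simp add: algebra_simps)
            also have "\<dots> = P (n - d2 - 1)" using basics nd d21 d1c t1pos by (intro F1') linarith+
            also have "\<dots> = P (n - d2 - 1 + \<tau>)" by (rule P\<tau>[symmetric])
            also have "\<dots> = P (j0 - 1)" unfolding \<tau>_def by (simp add: algebra_simps)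
            also have "\<dots> = f (j0 - 1)" using basics True j0r nd d21 d1c
              by (intro F1'[symmetric]) linarith+
            also have "\<dots> = Q (j0 - 1)" using basics True j0r xv yv t1d2 d2pos by (intro G1') linarith+
            also have "\<dots> = Q (-d2 - 1 + \<rho>)" unfolding \<rho>_def \<tau>_def by (simp add: algebra_simps)
            also have "\<dots> = Q (-d2 - 1)" using basics nD1 unfolding D_def by simp
            finally have fy: "f (-d2 - 1) = Q (-d2 - 1)" .
            have e: "-b - t2 - 1 = -d2 - 1" using bb by simp
            show ?thesis using G3 fy unfolding e by simp
          next
            case False
            then have "(n - d2 + t1) mod d1 = 0" using basics j0r unfolding j0_def by linarith
            then have "d1 dvd (n - d2 + t1)" by (simp add: dvd_eq_mod_eq_0)
            then have "d1 dvd (n - d2 + t1) - d1" by (simp add: dvd_diff)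
            then have dv: "d1 dvd c - d2 + t1" using basics nd by (simp add: algebra_simps)
            have "c - d2 + t1 = 0"
              by (rule dvd_small_zero[OF dv]) (use ct t2nz t12 t1pos d1c d21 in linarith)+
            then show ?thesis using basics d1c d21s t1pos by linarith
          qed
        qed
      next
        case nC: False
        have xle: "x \<le> -1 - d2" using nC by linarith
        have yle: "y \<le> n - 3" unfolding y_def using basics by linarith
        have nb: "\<not> \<beta> (-t1 - 1)" using bG nB basics unfolding x_def by auto
        have o1a: "\<pi> (-t1 - 1)" using b4 nb by simp
        have o1b: "\<pi> (y - d2 + 1)"
        proof -
          have "\<beta> (y - d2 + 1) = \<pi> (y - d2 + 1)" using bJ nB yle by auto
          then show ?thesis using bR by simp
        qed
        have o2a: "\<pi> (x + n - 1)"
        proof (cases "x + n - 1 \<ge> -t1")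
          case True
          have "\<beta> (x + n - 1) = \<pi> (x + n - 1)" using bJ True xle by auto
          moreover have "\<beta> (x - 1 + 1 * n) = \<beta> (x - 1)" by (rule \<beta>sh)
          ultimately show ?thesis using bL by (simp add: algebra_simps)
        next
          case False
          then have "x + n - 1 = -t1 - 1" using xn by linarith
          then show ?thesis using o1a by simp
        qed
        have nb2: "\<not> \<beta> (-1 - d2)" using bG xle yge by auto
        have o2b: "\<pi> (n - 2 - d2 + 1)"
        proof -
          have "\<beta> (-1 - d2 + 1 * n) = \<beta> (-1 - d2)" by (rule \<beta>sh)
          then have "\<not> \<beta> (n - 1 - d2)" using nb2 by (simp add: algebra_simps)
          then show ?thesis using b3 by (simp add: algebra_simps)
        qed
        have l1: "-t1 \<le> y - d2 + 1" using nB by linarith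
        have l2: "x + n \<le> n - 2 - d2 + 1" using xle by linarith
        from two_runs[OF d1pos \<pi>per \<pi>par Rz o1a o1b l1 Lz o2a o2b l2]
        show ?thesis
        proof (elim disjE)
          assume "\<exists>k. x + n = -t1 + k * d1 \<and> n - 2 - d2 - (x + n) = y - d2 - -t1"
          then obtain k where k: "x + n = -t1 + k * d1" "n - 2 - d2 - (x + n) = y - d2 - -t1" by blast
          have bK: "b = d2 - d1 + k * d1" using k basics unfolding x_def y_def by linarith
          have "k * d1 = d1"
            by (rule mult_window_one[of _ k]) (use bK Lb basics in \<open>unfold x_def, linarith\<close>)+
          then show ?thesis using bK by simp
        next
          assume "y - d2 - - t1 + (n - 2 - d2 - (x + n)) + 2 \<le> d1 - 4"
          then show ?thesis using sumge by linarith
        next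
          assume a: "y - d2 - - t1 + (n - 2 - d2 - (x + n)) + 2 = d1 - 2 \<and>
                     d1 dvd x + n - (y - d2) - 2 \<and> d1 dvd n - 2 - d2 + 2 - - t1"
          have "x + n - (y - d2) - 2 = d1 - t2" unfolding x_def y_def using basics by linarith
          then have "d1 dvd d1 - t2" using a by simp
          then have "d1 dvd d1 - (d1 - t2)" by (rule dvd_diff[OF dvd_refl])
          then have dv: "d1 dvd t2" by simp
          have t20: "t2 = 0" by (rule dvd_small_zero[OF dv]) (use t2b basics in linarith)+
          then have t10: "t1 = 0" using basics by linarith
          have cv: "c = d1 + d2" using a t20 t10 unfolding x_def y_def using basics by linarith
          have "f (-1 - d2) = f (-1 - d2 + 1 * n)" by (rule fsh[symmetric])
          also have "\<dots> = f (n - 1 - d2)" by (simp add: algebra_simps)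
          also have "\<dots> = P (n - 1 - d2)" using basics by (intro F1') linarith+
          also have "\<dots> = P (-1 + 2 * d1)" using cv nd by (simp add: algebra_simps)
          also have "\<dots> = P (-1)" by (rule Psh)
          finally have e1: "f (-1 - d2) = P (-1)" .
          have e2: "f (-1) \<noteq> P (-1)" using F3 t10 by simp
          have "\<beta> (-1 - d2)" unfolding \<beta>_def using e1 e2 by simp
          then show ?thesis using nb2 by simp
        qed
      qed
    qed

  qed
qed



lemma concat_replicate_nth:
  "i < q * length p \<Longrightarrow> concat (replicate q p) ! i = p ! (i mod length p)"
proof (induction q arbitrary: i)
  case 0 then show ?case by simp
next
  case (Suc q)
  show ?case
  proof (cases "i < length p")
    case True then show ?thesis by (simp add: nth_append)
  next
    case False
    then have "i - length p < q * length p" using Suc.prems by auto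
    then have "concat (replicate q p) ! (i - length p) = p ! ((i - length p) mod length p)"
      by (rule Suc.IH)
    moreover have "(i - length p) mod length p = i mod length p" using False
      by (simp add: le_mod_geq)
    ultimately show ?thesis using False by (simp add: nth_append)
  qed
qed

lemma Bset_nth:
  assumes "w \<in> Bset n c d"
  shows "length w = n" "1 \<le> d" "d \<le> n - c" "n div 2 \<le> c" "d \<le> n div 2" "aperiodic (take d w)"
    and "\<And>i. i < c + d - 1 \<Longrightarrow> w ! i = w ! (i mod d)"
    and "w ! (c + d - 1) = (\<not> w ! ((c + d - 1) mod d))"
proof -
  define q where "q = (c + d - 1) div d"
  define r where "r = c + d - 1 - q * d"
  have A: "length w = n" "1 \<le> d" "d \<le> n - c" "n div 2 \<le> c" "d \<le> n div 2" "aperiodic (take d w)"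
    and T: "take (c + d) w = concat (replicate q (take d w)) @ take r w @ [\<not> w ! r]"
    using assms unfolding Bset_def q_def r_def Let_def by auto
  show "length w = n" "1 \<le> d" "d \<le> n - c" "n div 2 \<le> c" "d \<le> n div 2" "aperiodic (take d w)"
    using A by auto
  have dn: "d \<le> n" using A by linarith
  have cdn: "c + d \<le> n" using A by linarith
  have ltd: "length (take d w) = d" using A dn by simp
  have rq: "r = (c + d - 1) mod d" unfolding r_def q_def by (simp add: minus_div_mult_eq_mod)
  have rd: "r < d" using rq A by simp
  have qle: "q * d \<le> c + d - 1" unfolding q_def using div_mult_mod_eq[of "c + d - 1" d] by linarith
  have qd: "q * d + r = c + d - 1" unfolding r_def using qle by simp
  have lc: "length (concat (replicate q (take d w))) = q * d" using ltd by (simp add: length_concat sum_list_replicate)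
  show "\<And>i. i < c + d - 1 \<Longrightarrow> w ! i = w ! (i mod d)"
  proof -
    fix i assume i: "i < c + d - 1"
    have "w ! i = take (c + d) w ! i" using i by simp
    also have "\<dots> = (concat (replicate q (take d w)) @ take r w @ [\<not> w ! r]) ! i" using T by simp
    also have "\<dots> = w ! (i mod d)"
    proof (cases "i < q * d")
      case True
      then have "(concat (replicate q (take d w)) @ take r w @ [\<not> w ! r]) ! i
                 = take d w ! (i mod d)" using lc ltd concat_replicate_nth[of i q "take d w"]
        by (simp add: nth_append)
      also have "\<dots> = w ! (i mod d)" using A by simp
      finally show ?thesis .
    next
      case False
      then have j: "i - q * d < r" using i qd by linarith
      then have "(concat (replicate q (take d w)) @ take r w @ [\<not> w ! r]) ! i
                 = w ! (i - q * d)" using lc False rd A dn by (simp add: nth_append)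
      moreover have "i mod d = i - q * d"
      proof -
        have "i = (i - q * d) + q * d" using False by simp
        then have "i mod d = (i - q * d) mod d" by (metis mod_mult_self3 add.commute mult.commute)
        then show ?thesis using j rd by simp
      qed
      ultimately show ?thesis by simp
    qed
    finally show "w ! i = w ! (i mod d)" .
  qed
  have "w ! (c + d - 1) = take (c + d) w ! (c + d - 1)" using A by simp
  also have "\<dots> = (concat (replicate q (take d w)) @ take r w @ [\<not> w ! r]) ! (q * d + r)"
    using T qd by simp
  also have "\<dots> = (\<not> w ! r)" using lc rd A dn by (simp add: nth_append)
  finally show "w ! (c + d - 1) = (\<not> w ! ((c + d - 1) mod d))" using rq by simp
qed


lemma B_fun:
  assumes B: "w \<in> Bset n c d" and ad: "is_add d w t"
  shows "\<forall>i. -int t \<le> i \<and> i \<le> int c + int d - 2 \<longrightarrow>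
            w ! nat (i mod int n) = w ! nat (i mod int d)"
    and "w ! nat ((int c + int d - 1) mod int n) \<noteq> w ! nat ((int c + int d - 1) mod int d)"
    and "w ! nat ((-int t - 1) mod int n) \<noteq> w ! nat ((-int t - 1) mod int d)"
proof -
  note Bn = Bset_nth[OF B]
  have ln: "length w = n" and d1: "1 \<le> d" and cdn: "c + d \<le> n" using Bn by linarith+
  have tn: "t < n" using ad ln unfolding is_add_def by simp
  have adi: "\<And>i. i < t \<Longrightarrow> w ! (n - 1 - i) = w ! nat ((int d - 1 - int i) mod int d)"
    using ad ln unfolding is_add_def by simp
  have adt: "w ! (n - 1 - t) \<noteq> w ! nat ((int d - 1 - int t) mod int d)"
    using ad ln unfolding is_add_def by simp
  show "\<forall>i. -int t \<le> i \<and> i \<le> int c + int d - 2 \<longrightarrow>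
            w ! nat (i mod int n) = w ! nat (i mod int d)"
  proof (intro allI impI)
    fix i assume i: "-int t \<le> i \<and> i \<le> int c + int d - 2"
    show "w ! nat (i mod int n) = w ! nat (i mod int d)"
    proof (cases "i \<ge> 0")
      case True
      have "i mod int n = i" using True i cdn by simp
      moreover have "nat i < c + d - 1" using True i by linarith
      moreover have "nat (i mod int d) = nat i mod d" using True by (simp add: nat_mod_distrib)
      ultimately show ?thesis using Bn(7)[of "nat i"] by simp
    next
      case False
      define k where "k = nat (-1 - i)"
      have k: "k < t" "int k = -1 - i" unfolding k_def using False i by auto
      have "(i + int n) mod int n = i + int n" using False i tn by (intro mod_pos_pos_trivial) linarith+
      then have "i mod int n = i + int n" by simp
      then have "nat (i mod int n) = n - 1 - k" using k tn by linarith
      moreover have "(int d - 1 - int k) mod int d = i mod int d"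
      proof -
        have eq: "int d - 1 - int k = i + int d" using k by linarith
        show ?thesis unfolding eq by simp
      qed
      ultimately show ?thesis using adi[OF k(1)] by simp
    qed
  qed
  have ci: "int c + int d - 1 = int (c + d - 1)" using d1 by simp
  have e: "nat ((int c + int d - 1) mod int n) = c + d - 1"
    unfolding ci of_nat_mod[symmetric] nat_int using cdn d1 by simp
  have e2: "nat ((int c + int d - 1) mod int d) = (c + d - 1) mod d"
    unfolding ci of_nat_mod[symmetric] nat_int by (rule refl)
  show "w ! nat ((int c + int d - 1) mod int n) \<noteq> w ! nat ((int c + int d - 1) mod int d)"
    using Bn(8) e e2 by simp
  have e3: "nat ((-int t - 1) mod int n) = n - 1 - t"
  proof -
    have "(-int t - 1 + int n) mod int n = -int t - 1 + int n" using tn by (intro mod_pos_pos_trivial) linarith+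
    then have "(-int t - 1) mod int n = -int t - 1 + int n" by simp
    then show ?thesis using tn by linarith
  qed
  have e4: "(-int t - 1) mod int d = (int d - 1 - int t) mod int d"
  proof -
    have eq: "int d - 1 - int t = (-int t - 1) + int d" by simp
    show ?thesis unfolding eq by simp
  qed
  show "w ! nat ((-int t - 1) mod int n) \<noteq> w ! nat ((-int t - 1) mod int d)"
    using adt e3 e4 by simp
qed


lemma shift_mult_int:
  fixes X :: "int \<Rightarrow> 'a"
  assumes sh: "\<forall>i. X (i + p) = X i"
  shows "X (i + k * p) = X i"
proof -
  have "\<forall>i. X (i + k * p) = X i"
  proof (induction k rule: int_induct[where k = 0])
    case base then show ?case by simp
  next
    case (step1 k)
    show ?case
    proof
      fix i
      have "X (i + (k + 1) * p) = X ((i + p) + k * p)" by (simp add: algebra_simps)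
      also have "\<dots> = X (i + p)" using step1.IH by blast
      also have "\<dots> = X i" using sh by blast
      finally show "X (i + (k + 1) * p) = X i" .
    qed
  next
    case (step2 k)
    show ?case
    proof
      fix i
      have "X (i + (k - 1) * p) = X ((i - p) + k * p)" by (simp add: algebra_simps)
      also have "\<dots> = X (i - p)" using step2.IH by blast
      also have "\<dots> = X (i - p + p)" using sh by metis
      also have "\<dots> = X i" by simp
      finally show "X (i + (k - 1) * p) = X i" .
    qed
  qed
  then show ?thesis by blast
qed

lemma aperiodic_dvd:
  assumes ap: "aperiodic w" and lw: "length w = m" and m: "m > 0"
    and sh: "\<forall>i::int. w ! nat (i mod int m) = w ! nat ((i + r) mod int m)"
  shows "int m dvd r"
proof (rule ccontr)
  assume nd: "\<not> int m dvd r"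
  define W where "W i = w ! nat (i mod int m)" for i
  have Wr: "\<forall>i. W (i + r) = W i" using sh unfolding W_def by metis
  have Wm: "\<forall>i. W (i + int m) = W i" unfolding W_def by simp
  define g where "g = gcd (int m) r"
  obtain u v where uv: "u * int m + v * r = g" unfolding g_def using bezout_int by blast
  have Wg: "\<forall>i. W (i + g) = W i"
  proof
    fix i
    have "W (i + g) = W ((i + v * r) + u * int m)" using uv by (simp add: algebra_simps)
    also have "\<dots> = W (i + v * r)" by (rule shift_mult_int[OF Wm])
    also have "\<dots> = W i" by (rule shift_mult_int[OF Wr])
    finally show "W (i + g) = W i" .
  qed
  have gpos: "g > 0" unfolding g_def using m by simp
  have gdvd: "g dvd int m" unfolding g_def by simp
  have gle: "g \<le> int m" using zdvd_imp_le[OF gdvd] m by simp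
  have gne: "g \<noteq> int m"
  proof
    assume "g = int m"
    then have "int m dvd r" unfolding g_def by (metis gcd_dvd2)
    then show False using nd by simp
  qed
  define e where "e = nat g"
  have ge: "int e = g" unfolding e_def using gpos by simp
  have e0: "0 < e" and em: "e < m" using gpos gle gne ge by linarith+
  have edvd: "e dvd m" using gdvd ge by (metis of_nat_dvd_iff)
  have "periodic w"
    unfolding periodic_def
  proof (intro exI conjI)
    show "0 < e" "e < length w" "e dvd length w" using e0 em edvd lw by auto
    show "w = concat (replicate (length w div e) (take e w))"
    proof (rule nth_equalityI)
      have "length (concat (replicate (m div e) (take e w))) = m div e * e"
        using em lw by (simp add: length_concat sum_list_replicate)
      also have "\<dots> = m" using edvd by simp
      finally show "length w = length (concat (replicate (length w div e) (take e w)))" using lw by simp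
    next
      fix i assume i: "i < length w"
      have lt: "length (take e w) = e" using em lw by simp
      have "concat (replicate (length w div e) (take e w)) ! i = take e w ! (i mod e)"
        using concat_replicate_nth[of i "length w div e" "take e w"] lt i edvd lw by simp
      also have "\<dots> = w ! (i mod e)" using e0 by simp
      finally have R: "concat (replicate (length w div e) (take e w)) ! i = w ! (i mod e)" .
      have "w ! i = W (int i)" unfolding W_def using i lw by simp
      also have "\<dots> = W (int i mod g + (int i div g) * g)" by simp
      also have "\<dots> = W (int i mod g)" by (rule shift_mult_int[OF Wg])
      also have "\<dots> = w ! (i mod e)"
      proof -
        have "int i mod g < int m" using gpos gle by (meson order_less_le_trans pos_mod_bound)
        moreover have "0 \<le> int i mod g" using gpos by simp
        ultimately have "int i mod g mod int m = int i mod g" by simp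
        moreover have "int i mod g = int (i mod e)" using ge by (simp add: of_nat_mod)
        ultimately show ?thesis unfolding W_def by simp
      qed
      finally show "w ! i = concat (replicate (length w div e) (take e w)) ! i" using R by simp
    qed
  qed
  then show False using ap unfolding aperiodic_def by simp
qed

lemma rshift_nth:
  assumes "b \<le> length s" "i < length s"
  shows "rshift b s ! i = s ! ((i + length s - b) mod length s)"
proof (cases "i < b")
  case True
  have "rshift b s ! i = drop (length s - b) s ! i" unfolding rshift_def using True assms
    by (simp add: nth_append)
  also have "\<dots> = s ! (length s - b + i)" using True assms by simp
  finally show ?thesis using True assms by (simp add: ac_simps)
next
  case False
  have "rshift b s ! i = take (length s - b) s ! (i - b)" unfolding rshift_def using False assms
    by (simp add: nth_append)
  also have "\<dots> = s ! (i - b)" using False assms by simp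
  moreover have "(i + length s - b) mod length s = i - b"
  proof -
    have eq: "i + length s - b = (i - b) + length s" using False by simp
    have e1: "(i - b + length s) mod length s = (i - b) mod length s" by (rule mod_add_self2)
    have e2: "(i - b) mod length s = i - b" using assms by (intro mod_less) linarith
    show ?thesis by (simp only: eq e1 e2)
  qed
  ultimately show ?thesis by simp
qed


theorem lemma7:
  fixes n c b d1 d2 t1 t2 :: nat and s :: "bool list"
  assumes "n \<le> 2 * c"
    and "d1 = n - c"
    and "s \<in> Bset n c d1"
    and "is_add d1 s t1"
    and "0 < b" and "b < n"
    and "rshift b s \<in> Bset n c d2"
    and "is_add d2 (rshift b s) t2"
    and "t1 \<le> t2"
    and "d1 + d2 \<le> c + t2 + t1 + 1"
  shows "b = d2"
proof -
  note hn = assms(1) and hd1 = assms(2) and sB = assms(3) and sA = assms(4) and hb = assms(5,6)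
    and uB = assms(7) and uA = assms(8) and ht = assms(9) and hyp = assms(10)
  define u where "u = rshift b s"
  have uB': "u \<in> Bset n c d2" and uA': "is_add d2 u t2" using uB uA unfolding u_def by auto
  note sN = Bset_nth[OF sB] and uN = Bset_nth[OF uB']
  have ls: "length s = n" using sN by simp
  have lu: "length u = n" using uN by simp
  have d1pos: "1 \<le> d1" and d2pos: "1 \<le> d2" using sN uN by auto
  have d21: "d2 \<le> d1" using uN hd1 by simp
  have cn: "c + d1 = n" using hd1 d1pos by simp
  have d1c: "d1 \<le> c" using hn hd1 by simp
  define f where "f i = s ! nat (i mod int n)" for i
  define P where "P i = s ! nat (i mod int d1)" for i
  define g where "g j = u ! nat (j mod int n)" for j
  define Q' where "Q' j = u ! nat (j mod int d2)" for j
  define Q where "Q i = Q' (i + int b)" for i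
  have npos: "0 < n" using hb by simp
  have gf: "\<And>j. g j = f (j - int b)"
  proof -
    fix j
    define m where "m = nat (j mod int n)"
    have mi: "int m = j mod int n" unfolding m_def using npos by simp
    have mn: "m < n" using mi npos by (metis of_nat_less_iff pos_mod_bound of_nat_0_less_iff)
    have "g j = u ! m" unfolding g_def m_def by simp
    also have "\<dots> = s ! ((m + n - b) mod n)" unfolding u_def using rshift_nth[of b s m] hb ls mn by simp
    also have "(m + n - b) mod n = nat ((j - int b) mod int n)"
    proof -
      have "int ((m + n - b) mod n) = int (m + n - b) mod int n" by (simp add: of_nat_mod)
      also have "\<dots> = (int m + (int n - int b)) mod int n" using hb by (simp add: of_nat_diff algebra_simps)
      also have "\<dots> = (j + (int n - int b)) mod int n" unfolding mi by (simp add: mod_add_left_eq)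
      also have "\<dots> = ((j - int b) + int n) mod int n" by (simp add: algebra_simps)
      also have "\<dots> = (j - int b) mod int n" by simp
      finally show ?thesis by simp
    qed
    finally show "g j = f (j - int b)" unfolding f_def by simp
  qed
  note sF = B_fun[OF sB sA] and uF = B_fun[OF uB' uA']
  have core_res: "int b = int d2"
  proof (rule core[where f = f and P = P and Q = Q and n = "int n" and c = "int c" and ?d1.0 = "int d1"
        and ?d2.0 = "int d2" and ?t1.0 = "int t1" and ?t2.0 = "int t2" and b = "int b"])
    show "int n = int c + int d1" using cn by simp
    show "1 \<le> int d2" "int d2 \<le> int d1" "int d1 \<le> int c" using d2pos d21 d1c by auto
    show "0 < int b" "int b < int n" "0 \<le> int t1" "int t1 \<le> int t2" using hb ht by auto
    show "int d1 + int d2 \<le> int c + int t1 + int t2 + 1" using hyp by simp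
    show "\<forall>i. f i = f (i mod int n)" unfolding f_def by simp
    show "\<forall>i. P i = P (i mod int d1)" unfolding P_def by simp
    show "\<forall>i. Q i = Q (i mod int d2)" unfolding Q_def Q'_def by (simp add: mod_add_left_eq)
    show "(\<forall>i. P i = P (i + int d2)) \<Longrightarrow> int d1 dvd int d2"
    proof -
      assume a: "\<forall>i. P i = P (i + int d2)"
      have lt: "length (take d1 s) = d1" using ls d1c cn by simp
      have "\<forall>i::int. take d1 s ! nat (i mod int d1) = take d1 s ! nat ((i + int d2) mod int d1)"
      proof
        fix i :: int
        have l1: "nat (i mod int d1) < d1" using d1pos by (simp add: nat_less_iff)
        have l2: "nat ((i + int d2) mod int d1) < d1" using d1pos by (simp add: nat_less_iff)
        have "P i = P (i + int d2)" using a by blast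
        then show "take d1 s ! nat (i mod int d1) = take d1 s ! nat ((i + int d2) mod int d1)"
          using l1 l2 unfolding P_def by simp
      qed
      note H = this
      have m0: "0 < d1" using d1pos by simp
      show "int d1 dvd int d2" by (rule aperiodic_dvd[OF sN(6) lt m0 H])
    qed
    show "\<forall>i. - int t1 \<le> i \<and> i \<le> int n - 2 \<longrightarrow> f i = P i"
    proof (intro allI impI)
      fix i assume i: "- int t1 \<le> i \<and> i \<le> int n - 2"
      have "- int t1 \<le> i \<and> i \<le> int c + int d1 - 2" using i cn by linarith
      then show "f i = P i" using sF(1) unfolding f_def P_def by blast
    qed
    show "f (int n - 1) \<noteq> P (int n - 1)"
    proof -
      have e: "int n - 1 = int c + int d1 - 1" using cn by linarith
      show ?thesis using sF(2) unfolding f_def P_def e .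
    qed
    show "f (- int t1 - 1) \<noteq> P (- int t1 - 1)" using sF(3) unfolding f_def P_def .
    show "\<forall>i. - int b - int t2 \<le> i \<and> i \<le> int c + int d2 - 2 - int b \<longrightarrow> f i = Q i"
    proof (intro allI impI)
      fix i assume i: "- int b - int t2 \<le> i \<and> i \<le> int c + int d2 - 2 - int b"
      have "- int t2 \<le> i + int b \<and> i + int b \<le> int c + int d2 - 2" using i by linarith
      then have "g (i + int b) = Q' (i + int b)" using uF(1) unfolding g_def Q'_def by blast
      then show "f i = Q i" using gf[of "i + int b"] unfolding Q_def by simp
    qed
    show "f (int c + int d2 - 1 - int b) \<noteq> Q (int c + int d2 - 1 - int b)"
    proof -
      have "g (int c + int d2 - 1) \<noteq> Q' (int c + int d2 - 1)" using uF(2) unfolding g_def Q'_def .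
      then show ?thesis using gf[of "int c + int d2 - 1"] unfolding Q_def by (simp add: algebra_simps)
    qed
    show "f (- int b - int t2 - 1) \<noteq> Q (- int b - int t2 - 1)"
    proof -
      have "g (- int t2 - 1) \<noteq> Q' (- int t2 - 1)" using uF(3) unfolding g_def Q'_def .
      moreover have "g (- int t2 - 1) = f (- int b - int t2 - 1)" unfolding gf by (rule arg_cong[where f=f]) simp
      moreover have "Q (- int b - int t2 - 1) = Q' (- int t2 - 1)" unfolding Q_def by (rule arg_cong[where f=Q']) simp
      ultimately show ?thesis by simp
    qed
  qed
  then show ?thesis by simp
qed



end
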